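(* Let $\lambda_{\max}>1$ and let $F:[0,\lambda_{\max}]\to\mathbb{R}_+$ be continuously differentiable with $F(0)=0$, such that $F(x)<F^\star$ for all $x\in[0,1)$, $F'(1)>0$, $F''$ exists and is continuous on $(0,\lambda_{\max})$ with $F''(1)<0$, and $F$ is strongly concave. Then there exist $c>0$ and $\varepsilon_0>0$ (depending on $F$) such that for all $\varepsilon\in(0,\varepsilon_0]$, $$q^\star_{TA}(\varepsilon):=\inf\{\mathbb{E}_\pi[\bar q]:\lambda\in\Lambda_2,\ R(\lambda)\le\varepsilon\}\;\ge\; c\sqrt{\frac{\log(1/\varepsilon)}{\varepsilon}}.$$
   Context: For a policy $\lambda:\mathbb{Z}_+\to[0,\lambda_{\max}]$, consider the continuous-time birth–death chain on $\mathbb{Z}_+$ with rate $\lambda(q)$ from $q$ to $q+1$ and rate $1$ from $q$ to $q-1$ ($q\ge1$); when positive recurrent on the states reachable from $0$, $\pi$ is its stationary distribution and $\bar q\sim\pi$. $\Lambda_2$ is the class of two-arrival policies: $\lambda(q)=1+k_1$ for $0\le q<\tau$ and $\lambda(q)=1-k_2$ for $q\ge\tau$, with $\tau\in\mathbb{Z}_+$, $k_1\in(0,\lambda_{\max}-1]$, $k_2\in(0,1]$. $F^\star=\sup\{\mathbb{E}_\alpha[F(X)]:\alpha$ a probability measure on $[0,\lambda_{\max}]$, $X\sim\alpha$, $\mathbb{E}_\alpha[X]\le1\}$ and $R(\lambda)=F^\star-\mathbb{E}_\pi[F(\lambda(\bar q))]$. $F$ strongly concave means there is $a>0$ with $F(y)\le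 F(x)+F'(x)(y-x)-a(y-x)^2$ for all $x,y\in[0,\lambda_{\max}]$. *)

theory Defs
  imports "HOL-Probability.Probability"
begin

definition two_arrival :: "nat \<Rightarrow> real \<Rightarrow> real \<Rightarrow> nat \<Rightarrow> real" where
  "two_arrival tau k1 k2 q = (if q < tau then 1 + k1 else 1 - k2)"

definition Lambda2 :: "real \<Rightarrow> (nat \<Rightarrow> real) set" where
  "Lambda2 lmax = {two_arrival tau k1 k2 | tau k1 k2.
      0 < k1 \<and> k1 \<le> lmax - 1 \<and> 0 < k2 \<and> k2 \<le> 1}"

text \<open>p is a stationary distribution of the continuous-time birth-death chain on the
  nonnegative integers with birth rate lam q (q to q+1) and death rate 1 (q to q-1, q >= 1):
  a probability distribution satisfying the global balance equations p Q = 0.\<close>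
definition stationary_bd :: "(nat \<Rightarrow> real) \<Rightarrow> (nat \<Rightarrow> real) \<Rightarrow> bool" where
  "stationary_bd lam p \<longleftrightarrow>
     (\<forall>q. 0 \<le> p q) \<and> p sums 1 \<and>
     p 0 * lam 0 = p 1 \<and>
     (\<forall>q\<ge>1. p q * (lam q + 1) = p (q - 1) * lam (q - 1) + p (q + 1))"

definition Fstar :: "real \<Rightarrow> (real \<Rightarrow> real) \<Rightarrow> real" where
  "Fstar lmax F = Sup {integral\<^sup>L \<alpha> F | \<alpha>.
      prob_space \<alpha> \<and> sets \<alpha> = sets (restrict_space borel {0..lmax}) \<and>
      space \<alpha> = {0..lmax} \<and> integral\<^sup>L \<alpha> (\<lambda>x. x) \<le> 1}"

definition regret :: "real \<Rightarrow> (real \<Rightarrow> real) \<Rightarrow> (nat \<Rightarrow> real) \<Rightarrow> (nat \<Rightarrow> real) \<Rightarrow> real" where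
  "regret lmax F lam p = Fstar lmax F - (\<Sum>q. p q * F (lam q))"

definition mean_queue :: "(nat \<Rightarrow> real) \<Rightarrow> real" where
  "mean_queue p = (\<Sum>q. real q * p q)"

end

theory Submission imports Defs "HOL-Real_Asymp.Real_Asymp" begin

lemma stat_rec:
  assumes "stationary_bd lam p"
  shows "p (Suc q) = p q * lam q"
proof (induction q rule: nat_less_induct)
  case (1 n)
  show ?case
  proof (cases n)
    case 0 then show ?thesis using assms unfolding stationary_bd_def by simp
  next
    case (Suc m)
    have IH: "p (Suc m) = p m * lam m" using 1 Suc by auto
    have "p (Suc m) * (lam (Suc m) + 1) = p m * lam m + p (Suc (Suc m))"
      using assms unfolding stationary_bd_def by (metis Suc_eq_plus1 diff_Suc_1 le_add2)
    then show ?thesis using IH Suc by (simp add: algebra_simps)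
  qed
qed

locale twoarr =
  fixes tau :: nat and k1 k2 :: real and p :: "nat \<Rightarrow> real"
  assumes k1: "0 < k1" and k2: "0 < k2" "k2 \<le> 1"
   and pnn: "\<And>q. 0 \<le> p q" and psum: "p sums 1"
   and rec: "\<And>q. p (Suc q) = p q * two_arrival tau k1 k2 q"
begin

lemma p_below: "q \<le> tau \<Longrightarrow> p q = p 0 * (1+k1)^q"
  by (induction q) (auto simp: rec two_arrival_def)

lemma p0pos: "p 0 > 0"
proof (rule ccontr)
  assume "\<not> p 0 > 0"
  then have z: "p 0 = 0" using pnn[of 0] by simp
  have "p q = 0" for q by (induction q) (auto simp: rec z)
  then have "p = (\<lambda>_. 0)" by auto
  then have "p sums 0" by simp
  then show False using psum sums_unique2 by fastforce
qed

lemma p_tail: "q \<ge> tau \<Longrightarrow> p (Suc q) \<le> p q"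
  using rec[of q] pnn[of q] k2 by (auto simp: two_arrival_def mult_left_le)

lemma p_le_s: "p q \<le> p tau"
proof (cases "q \<le> tau")
  case True
  then show ?thesis using p_below[of q] p_below[of tau] p0pos k1
    by (auto intro!: mult_left_mono power_increasing)
next
  case False
  then have "tau \<le> q" by simp
  then show ?thesis
  proof (induction q rule: dec_induct)
    case base then show ?case by simp
  next
    case (step n) then show ?case using p_tail[of n] by linarith
  qed
qed

lemma telescope: "k1 * (\<Sum>q<tau. p q) = p tau - p 0"
proof -
  have "(\<Sum>q<tau. p (Suc q) - p q) = p tau - p 0" by (rule sum_lessThan_telescope)
  moreover have "(\<Sum>q<tau. p (Suc q) - p q) = (\<Sum>q<tau. k1 * p q)"
    by (rule sum.cong) (auto simp: rec two_arrival_def algebra_simps)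
  ultimately show ?thesis by (simp add: sum_distrib_left)
qed

lemma psummable: "summable p" using psum by (simp add: sums_summable)
lemma psuminf: "suminf p = 1" using psum by (simp add: sums_unique[symmetric])

lemma qsummable: "summable (\<lambda>q. real q * p q)"
proof -
  define c where "c = 1 - k2/2"
  define N where "N = max tau (nat \<lceil>2/k2\<rceil>)"
  have c1: "c < 1" using k2 by (simp add: c_def)
  show ?thesis
  proof (rule summable_ratio_test[OF c1, of N])
    fix n assume n: "N \<le> n"
    then have nt: "tau \<le> n" by (simp add: N_def)
    have n2: "real n \<ge> 2/k2" using n unfolding N_def by linarith
    have ps: "p (Suc n) = (1 - k2) * p n" using rec[of n] nt by (simp add: two_arrival_def)
    have "real (Suc n) * (1 - k2) \<le> c * real n"
    proof -
      have "k2 * real n \<ge> 2" using n2 k2 by (simp add: field_simps)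
      then show ?thesis using k2 by (simp add: c_def algebra_simps)
    qed
    then have "real (Suc n) * (1 - k2) * p n \<le> c * real n * p n"
      using pnn[of n] by (simp add: mult_right_mono)
    moreover have "norm (real (Suc n) * p (Suc n)) = real (Suc n) * (1 - k2) * p n"
      using pnn[of "Suc n"] ps by simp
    moreover have "norm (real n * p n) = real n * p n" using pnn[of n] by simp
    ultimately show "norm (real (Suc n) * p (Suc n)) \<le> c * norm (real n * p n)"
      by (simp add: mult.assoc)
  qed
qed

lemma mean_ge: "real m * (1 - (\<Sum>q<m. p q)) \<le> mean_queue p"
proof -
  have s1: "(\<lambda>q. real m * p q - (if q \<in> {..<m} then real m * p q else 0)) sums
             (real m * 1 - (\<Sum>q\<in>{..<m}. real m * p q))"
    by (intro sums_diff sums_mult psum sums_If_finite_set) auto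
  have "real m * (1 - (\<Sum>q<m. p q)) = (\<Sum>q. real m * p q - (if q \<in> {..<m} then real m * p q else 0))"
    using sums_unique[OF s1] by (simp add: sum_distrib_left algebra_simps)
  also have "\<dots> \<le> (\<Sum>q. real q * p q)"
  proof (rule suminf_le)
    fix q show "real m * p q - (if q \<in> {..<m} then real m * p q else 0) \<le> real q * p q"
      using pnn[of q] by (auto intro: mult_right_mono)
  qed (use s1 qsummable in \<open>auto simp: sums_summable\<close>)
  finally show ?thesis by (simp add: mean_queue_def)
qed

lemma partial_le1: "(\<Sum>q<n. p q) \<le> 1"
  using sum_le_suminf[OF psummable, of "{..<n}"] pnn psuminf by auto

lemma small_prefix: "(\<Sum>q<t. p q) \<le> real t * p tau"
  using sum_mono[of "{..<t}" p "\<lambda>_. p tau"] p_le_s by auto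

lemma half_prefix: "(\<Sum>q< tau div 2. p q) \<le> 1/2"
proof -
  let ?m = "tau div 2"
  have "(\<Sum>q<?m. p q) \<le> (\<Sum>q<?m. p (q + ?m))"
  proof (rule sum_mono)
    fix q assume "q \<in> {..<?m}"
    then have "q + ?m \<le> tau" by auto
    then show "p q \<le> p (q + ?m)" using p_below[of q] p_below[of "q + ?m"] p0pos k1
      by (auto intro!: mult_left_mono power_increasing)
  qed
  also have "(\<Sum>q<?m. p (q + ?m)) = (\<Sum>q\<in>{?m..<2*?m}. p q)"
    by (rule sum.reindex_bij_witness[of _ "\<lambda>q. q - ?m" "\<lambda>q. q + ?m"]) auto
  finally have a: "(\<Sum>q<?m. p q) \<le> (\<Sum>q\<in>{?m..<2*?m}. p q)" .
  have "(\<Sum>q<2*?m. p q) = (\<Sum>q<?m. p q) + (\<Sum>q\<in>{?m..<2*?m}. p q)"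
    by (metis lessThan_atLeast0 mult_2 le_add1 sum.atLeastLessThan_concat le0)
  then show ?thesis using a partial_le1[of "2*?m"] by linarith
qed

lemma sumF_le:
  fixes F :: "real \<Rightarrow> real"
  assumes Fb: "\<And>y. y \<in> {0..lmax} \<Longrightarrow> F y \<le> F 1 + d*(y-1) - A*(y-1)^2"
  and kl: "1 + k1 \<le> lmax" and A0: "A \<ge> 0"
  shows "(\<Sum>q. p q * F (two_arrival tau k1 k2 q)) \<le> F 1 - d * p 0 - A * (k1 * (p tau - p 0))"
proof -
  let ?l = "two_arrival tau k1 k2"
  define h where "h q = p q * (?l q - 1)^2" for q
  have lrange: "?l q \<in> {0..lmax}" for q using k1 k2 kl by (auto simp: two_arrival_def)
  have hb: "norm (h q) \<le> p q * (k1^2 + k2^2)" for q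
    using pnn[of q] k1 k2 by (auto simp: h_def two_arrival_def intro!: mult_left_mono)
  have hs: "summable h"
    by (rule summable_comparison_test[OF _ summable_mult2[OF psummable]]) (use hb in auto)
  have "(\<Sum>q<tau. h q) = (\<Sum>q<tau. k1 * (k1 * p q))"
    by (rule sum.cong) (auto simp: h_def two_arrival_def power2_eq_square)
  also have "\<dots> = k1 * (p tau - p 0)" using telescope by (simp add: sum_distrib_left[symmetric])
  finally have hH: "k1 * (p tau - p 0) \<le> suminf h"
    using sum_le_suminf[OF hs, of "{..<tau}"] pnn by (auto simp: h_def)
  define g where "g q = F 1 * p q + d * (p (Suc q) - p q) - A * h q" for q
  have ps: "(\<lambda>q. p (Suc q)) sums (1 - p 0)" using psum by (simp add: sums_Suc_iff)
  have gs: "g sums (F 1 * 1 + d * ((1 - p 0) - 1) - A * suminf h)"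
    unfolding g_def by (intro sums_diff sums_add sums_mult psum ps summable_sums hs)
  have fg: "p q * F (?l q) \<le> g q" for q
  proof -
    have "p q * F (?l q) \<le> p q * (F 1 + d*(?l q-1) - A*(?l q-1)^2)"
      using Fb[OF lrange[of q]] pnn[of q] by (rule mult_left_mono)
    also have "\<dots> = g q" by (simp add: g_def h_def rec algebra_simps)
    finally show ?thesis .
  qed
  have fs: "summable (\<lambda>q. p q * F (?l q))"
  proof (rule summable_comparison_test[OF _ summable_mult2[OF psummable]])
    show "\<exists>N. \<forall>n\<ge>N. norm (p n * F (?l n)) \<le> p n * (\<bar>F (1+k1)\<bar> + \<bar>F (1-k2)\<bar>)"
      using pnn by (auto simp: two_arrival_def abs_mult intro!: mult_left_mono)
  qed
  have "(\<Sum>q. p q * F (?l q)) \<le> suminf g"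
    using fg fs gs by (intro suminf_le) (auto simp: sums_summable)
  also have "\<dots> = F 1 * 1 + d * ((1 - p 0) - 1) - A * suminf h" using gs by (simp add: sums_unique[symmetric])
  finally have "(\<Sum>q. p q * F (?l q)) \<le> F 1 * 1 + d * ((1 - p 0) - 1) - A * suminf h" .
  moreover have "A * (k1 * (p tau - p 0)) \<le> A * suminf h" using hH A0 by (rule mult_left_mono)
  ultimately show ?thesis by simp
qed

end

lemma Fstar_ge:
  fixes F :: "real \<Rightarrow> real"
  assumes l: "1 \<le> lmax" and c: "continuous_on {0..lmax} F" and B: "\<And>y. y \<in> {0..lmax} \<Longrightarrow> F y \<le> B"
    and B0: "0 \<le> B"
  shows "F 1 \<le> Fstar lmax F"
proof -
  let ?M = "restrict_space borel {0..lmax::real}"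
  let ?S = "{integral\<^sup>L \<alpha> F | \<alpha>.
      prob_space \<alpha> \<and> sets \<alpha> = sets (restrict_space borel {0..lmax}) \<and>
      space \<alpha> = {0..lmax} \<and> integral\<^sup>L \<alpha> (\<lambda>x. x) \<le> 1}"
  have sp: "space ?M = {0..lmax}" by simp
  have one: "(1::real) \<in> space ?M" using l by simp
  have mF: "F \<in> borel_measurable ?M" by (rule borel_measurable_continuous_on_restrict[OF c])
  have mid: "(\<lambda>x::real. x) \<in> borel_measurable ?M"
    by (rule borel_measurable_continuous_on_restrict) (intro continuous_intros)
  have "integral\<^sup>L (return ?M 1) F \<in> ?S"
    using one mF mid by (auto simp: prob_space_return integral_return intro!: exI[of _ "return ?M 1"])
  then have mem: "F 1 \<in> ?S" using one mF by (simp add: integral_return)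
  have bdd: "bdd_above ?S"
  proof (rule bdd_aboveI)
    fix x assume "x \<in> ?S"
    then obtain \<alpha> where x: "x = integral\<^sup>L \<alpha> F" and ps: "prob_space \<alpha>" and spa: "space \<alpha> = {0..lmax}" by auto
    show "x \<le> B"
    proof (cases "integrable \<alpha> F")
      case True
      have "integral\<^sup>L \<alpha> F \<le> integral\<^sup>L \<alpha> (\<lambda>_. B)"
        using True ps spa B by (intro integral_mono) (auto intro: finite_measure.integrable_const prob_space.finite_measure)
      also have "\<dots> = B" using ps by (simp add: prob_space.prob_space)
      finally show ?thesis using x by simp
    next
      case False then show ?thesis using x B0 by (simp add: not_integrable_integral_eq)
    qed
  qed
  show ?thesis unfolding Fstar_def using cSup_upper[OF mem bdd] .
qed


lemma eventually_conds:
  fixes A d :: real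
  assumes "A > 0" "d > 0"
  shows "\<forall>\<^sub>F e in at_right 0. 0 < e \<and> e < 1 \<and> ln (1/e) > 0 \<and> ln (1/e) / e \<ge> max 1 ((64/A)^2)
     \<and> e * ln (1/e) \<le> (d/8)^2 \<and> ln (1/(4* sqrt(ln (1/e)*e))) - ln (1/e)/4 \<ge> - ln d"
proof -
  have l1: "((\<lambda>e::real. e * ln (1/e)) \<longlongrightarrow> 0) (at_right 0)" by real_asymp
  have l2: "filterlim (\<lambda>e::real. ln (1/e) / e) at_top (at_right 0)" by real_asymp
  have l3: "filterlim (\<lambda>e::real. ln (1/(4* sqrt(ln (1/e)*e))) - ln (1/e)/4) at_top (at_right 0)" by real_asymp
  have e4: "\<forall>\<^sub>F e in at_right (0::real). ln (1/e) > 0" by real_asymp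
  have e1: "\<forall>\<^sub>F e in at_right (0::real). 0 < e \<and> e < 1"
    using eventually_at_right_real[of 0 1] by (auto elim: eventually_mono)
  have e2: "\<forall>\<^sub>F e in at_right (0::real). e * ln (1/e) \<le> (d/8)^2"
    using order_tendstoD(2)[OF l1, of "(d/8)^2"] assms by (auto elim: eventually_mono)
  show ?thesis
    using e1 e2 e4 filterlim_at_top[THEN iffD1, OF l2, rule_format, of "max 1 ((64/A)^2)"]
      filterlim_at_top[THEN iffD1, OF l3, rule_format, of "- ln d"]
    by eventually_elim auto
qed

theorem theorem6p2:
  fixes lmax :: real and F F' F'' :: "real \<Rightarrow> real"
  assumes lmax: "lmax > 1"
    and Fnonneg: "\<forall>x\<in>{0..lmax}. F x \<ge> 0"
    and F'_deriv: "\<forall>x\<in>{0..lmax}. (F has_real_derivative F' x) (at x within {0..lmax})"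
    and F'_cont: "continuous_on {0..lmax} F'"
    and F0: "F 0 = 0"
    and below: "\<forall>x\<in>{0..<1}. F x < Fstar lmax F"
    and F'1: "F' 1 > 0"
    and F''_deriv: "\<forall>x\<in>{0<..<lmax}. (F' has_real_derivative F'' x) (at x)"
    and F''_cont: "continuous_on {0<..<lmax} F''"
    and F''1: "F'' 1 < 0"
    and strong_concave: "\<exists>a>0. \<forall>x\<in>{0..lmax}. \<forall>y\<in>{0..lmax}.
                            F y \<le> F x + F' x * (y - x) - a * (y - x)\<^sup>2"
  shows "\<exists>c>0. \<exists>\<epsilon>0>0. \<forall>\<epsilon>. 0 < \<epsilon> \<and> \<epsilon> \<le> \<epsilon>0 \<longrightarrow>
           (\<forall>lam\<in>Lambda2 lmax. \<forall>p. stationary_bd lam p \<and> regret lmax F lam p \<le> \<epsilon> \<longrightarrow>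
              mean_queue p \<ge> c * sqrt (ln (1 / \<epsilon>) / \<epsilon>))"
proof -
  obtain A where A0: "A > 0" and Asc: "\<forall>x\<in>{0..lmax}. \<forall>y\<in>{0..lmax}.
                            F y \<le> F x + F' x * (y - x) - A * (y - x)\<^sup>2"
    using strong_concave by blast
  define d where "d = F' 1"
  have d0: "d > 0" using F'1 by (simp add: d_def)
  have one: "(1::real) \<in> {0..lmax}" using lmax by simp
  have Fb: "F y \<le> F 1 + d*(y-1) - A*(y-1)^2" if "y \<in> {0..lmax}" for y
    using Asc one that by (simp add: d_def)
  have Fc: "continuous_on {0..lmax} F"
    using F'_deriv by (auto simp: continuous_on_eq_continuous_within intro: DERIV_continuous)
  have FB: "F y \<le> F 1 + d * lmax" if "y \<in> {0..lmax}" for y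
  proof -
    have "F y \<le> F 1 + d*(y-1)" using Fb[OF that] A0 by (smt (verit) zero_le_power2 mult_nonneg_nonneg)
    also have "\<dots> \<le> F 1 + d * lmax" using that d0 by (auto intro!: mult_left_mono)
    finally show ?thesis .
  qed
  have FstarF1: "F 1 \<le> Fstar lmax F"
  proof (rule Fstar_ge[OF _ Fc FB])
    show "1 \<le> lmax" using lmax by simp
    have "0 \<le> F 1" using Fnonneg one by blast
    moreover have "0 \<le> d * lmax" using d0 lmax by simp
    ultimately show "0 \<le> F 1 + d * lmax" by simp
  qed
  define c where "c = min (1/2) (A/256)"
  have c0: "c > 0" using A0 by (simp add: c_def)
  obtain b where b0: "b > 0" and bP: "\<And>e. 0 < e \<Longrightarrow> e < b \<Longrightarrow> 0 < e \<and> e < 1 \<and> ln (1/e) > 0 \<and> ln (1/e) / e \<ge> max 1 ((64/A)^2)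
     \<and> e * ln (1/e) \<le> (d/8)^2 \<and> ln (1/(4* sqrt(ln (1/e)*e))) - ln (1/e)/4 \<ge> - ln d"
    using eventually_conds[OF A0 d0] unfolding eventually_at_right_field by auto
  have main: "\<forall>\<epsilon>. 0 < \<epsilon> \<and> \<epsilon> \<le> b/2 \<longrightarrow> (\<forall>lam\<in>Lambda2 lmax. \<forall>p. stationary_bd lam p \<and> regret lmax F lam p \<le> \<epsilon> \<longrightarrow> mean_queue p \<ge> c * sqrt (ln (1 / \<epsilon>) / \<epsilon>))"
  proof (intro allI impI ballI)
    fix \<epsilon> lam p
    assume eps: "0 < \<epsilon> \<and> \<epsilon> \<le> b/2" and lamL: "lam \<in> Lambda2 lmax"
      and st: "stationary_bd lam p \<and> regret lmax F lam p \<le> \<epsilon>"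
    define L where "L = ln (1/\<epsilon>)"
    define R where "R = sqrt (L/\<epsilon>)"
    have P: "0 < \<epsilon> \<and> \<epsilon> < 1 \<and> L > 0 \<and> L / \<epsilon> \<ge> max 1 ((64/A)^2)
       \<and> \<epsilon> * L \<le> (d/8)^2 \<and> ln (1/(4* sqrt(L*\<epsilon>))) - L/4 \<ge> - ln d"
      using bP[of \<epsilon>] eps b0 unfolding L_def by auto
    obtain tau k1 k2 where lam: "lam = two_arrival tau k1 k2" and kk: "0 < k1" "k1 \<le> lmax - 1" "0 < k2" "k2 \<le> 1"
      using lamL unfolding Lambda2_def by auto
    have pn: "\<And>q. 0 \<le> p q" and ps1: "p sums 1" using st unfolding stationary_bd_def by auto
    have rc: "\<And>q. p (Suc q) = p q * two_arrival tau k1 k2 q"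
    proof -
      fix q show "p (Suc q) = p q * two_arrival tau k1 k2 q"
      proof -
        have "p (Suc q) = p q * lam q" using st by (intro stat_rec) auto
        then show ?thesis by (simp only: lam)
      qed
    qed
    interpret twoarr tau k1 k2 p
      by (rule twoarr.intro[OF kk(1) kk(3) kk(4) pn ps1 rc])
    define s where "s = p tau"
    have sp: "s = p 0 * (1+k1)^tau" using p_below[of tau] by (simp add: s_def)
    have p0s: "p 0 \<le> s" using sp p0pos kk by (simp add: mult_le_cancel_left1 one_le_power)
    have reg: "d * p 0 + A * (k1 * (s - p 0)) \<le> \<epsilon>"
    proof -
      have "(\<Sum>q. p q * F (lam q)) \<le> F 1 - d * p 0 - A * (k1 * (s - p 0))"
        using sumF_le[where F=F and lmax=lmax and d=d and A=A, OF Fb] kk A0 lam s_def by auto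
      then show ?thesis using st FstarF1 unfolding regret_def by linarith
    qed
    have t1: "0 \<le> A * (k1 * (s - p 0))" using A0 kk p0s by simp
    have p0e: "p 0 \<le> \<epsilon> / d" using reg t1 d0 by (simp add: field_simps)
    have k1e: "k1 * (s - p 0) \<le> \<epsilon> / A" using reg d0 p0pos A0
      by (simp add: field_simps) (smt (verit) mult_pos_pos)
    have R2: "R^2 = L/\<epsilon>" using P by (simp add: R_def)
    have R1: "R \<ge> 1" using P by (simp add: R_def)
    have RA: "R \<ge> 64/A" using P A0 unfolding R_def
      by (metis max.bounded_iff real_le_rsqrt)
    have eR: "\<epsilon> * R = sqrt (\<epsilon> * L)"
    proof -
      have "\<epsilon> = sqrt (\<epsilon>^2)" using P by simp
      then have "\<epsilon> * R = sqrt (\<epsilon>^2 * (L/\<epsilon>))" unfolding R_def by (metis real_sqrt_mult)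
      also have "\<epsilon>^2 * (L/\<epsilon>) = \<epsilon> * L" using P by (simp add: power2_eq_square field_simps)
      finally show ?thesis .
    qed
    have eRd: "8 * (\<epsilon> * R) \<le> d"
    proof -
      have "sqrt (\<epsilon> * L) \<le> sqrt ((d/8)^2)" using P by (intro real_sqrt_le_mono) auto
      then show ?thesis using eR d0 by simp
    qed
    show "c * sqrt (ln (1 / \<epsilon>) / \<epsilon>) \<le> mean_queue p"
    proof (cases "s \<le> 1/(4*R)")
      case True
      define t where "t = nat \<lfloor>1/(2* s)\<rfloor>"
      have s0: "s > 0" using p0pos p0s by simp
      have fl: "real t = of_int \<lfloor>1/(2* s)\<rfloor>" unfolding t_def using s0 by (intro of_nat_nat) simp
      have tle: "real t \<le> 1/(2* s)" using fl floor_correct[of "1/(2* s)"] by linarith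
      have tge: "real t \<ge> 1/(2* s) - 1" using fl floor_correct[of "1/(2* s)"] by simp
      have ts: "real t * s \<le> 1/2" using tle s0 by (simp add: field_simps)
      have "real t * (1/2) \<le> real t * (1 - (\<Sum>q<t. p q))"
        using small_prefix[of t] ts s_def by (intro mult_left_mono) auto
      also have "\<dots> \<le> mean_queue p" by (rule mean_ge)
      finally have m1: "real t / 2 \<le> mean_queue p" by simp
      have "1/(2* s) \<ge> 2 * R" using True s0 R1 by (simp add: field_simps)
      then have "real t / 2 \<ge> R/2" using tge R1 by linarith
      moreover have "c * R \<le> (1/2) * R" using R1 by (intro mult_right_mono) (auto simp: c_def)
      ultimately have "c * R \<le> mean_queue p" using m1 by linarith
      then show ?thesis by (simp add: R_def L_def)
    next
      case False
      then have sR: "s > 1/(4*R)" by simp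
      have Rpos: "R > 0" using R1 by simp
      have p0h: "p 0 \<le> s/2"
      proof -
        have "\<epsilon> / d \<le> 1/(8*R)" using eRd d0 Rpos by (simp add: field_simps)
        then show ?thesis using p0e sR by (simp add: field_simps)
      qed
      have s0: "s > 0" using p0pos p0s by linarith
      have "k1 * (s/2) \<le> k1 * (s - p 0)" using p0h kk by (intro mult_left_mono) auto
      then have "k1 * (s/2) \<le> \<epsilon> / A" using k1e by linarith
      then have k1b: "k1 \<le> 8 * \<epsilon> * R / A"
      proof -
        assume h: "k1 * (s/2) \<le> \<epsilon> / A"
        have "k1 * (1/(8*R)) \<le> k1 * (s/2)" using sR kk by (intro mult_left_mono) (auto simp: field_simps)
        then have "k1 / (8*R) \<le> \<epsilon> / A" using h by simp
        then show ?thesis using Rpos A0 by (simp add: field_simps)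
      qed
      have lnsp: "ln (s / p 0) \<le> real tau * k1"
      proof -
        have "ln (s / p 0) = real tau * ln (1+k1)" using sp p0pos kk by (simp add: ln_realpow)
        also have "\<dots> \<le> real tau * k1" using kk by (intro mult_left_mono ln_add_one_self_le_self) auto
        finally show ?thesis .
      qed
      have lb: "ln (s / p 0) \<ge> L/4"
      proof -
        have q1: "s / p 0 \<ge> (1/(4*R)) / (\<epsilon>/d)" 
        proof (rule frac_le)
          show "0 \<le> s" using s0 by simp
          show "1/(4*R) \<le> s" using sR by simp
          show "0 < p 0" by (rule p0pos)
          show "p 0 \<le> \<epsilon>/d" by (rule p0e)
        qed
        have q2: "(1/(4*R)) / (\<epsilon>/d) = d * (1/(4* sqrt(L*\<epsilon>)))"
          using eR d0 P by (simp add: field_simps mult.commute)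
        have "ln (s / p 0) \<ge> ln (d * (1/(4* sqrt(L*\<epsilon>))))"
        proof -
          have q3: "d * (1/(4* sqrt(L*\<epsilon>))) \<le> s / p 0" using q1[unfolded q2] .
          have pos: "0 < d * (1/(4* sqrt(L*\<epsilon>)))" using d0 P by simp
          have pos2: "0 < s / p 0" using s0 p0pos by simp
          show ?thesis using q3 pos pos2 by simp
        qed
        also have "ln (d * (1/(4* sqrt(L*\<epsilon>)))) = ln d + ln (1/(4* sqrt(L*\<epsilon>)))"
          using d0 P by (intro ln_mult_pos) auto
        finally show ?thesis using P by linarith
      qed
      have taub: "real tau \<ge> A * R / 32"
      proof -
        have "L/4 \<le> real tau * k1" using lb lnsp by linarith
        also have "\<dots> \<le> real tau * (8 * \<epsilon> * R / A)" using k1b by (intro mult_left_mono) auto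
        finally have "L/4 \<le> real tau * (8 * \<epsilon> * R / A)" .
        moreover have "L = R^2 * \<epsilon>" using R2 P by (simp add: field_simps)
        ultimately have "R^2 * \<epsilon> * A \<le> 32 * real tau * \<epsilon> * R" using A0 by (simp add: field_simps)
        then have "(R * A) * (R * \<epsilon>) \<le> (32 * real tau) * (R * \<epsilon>)" by (simp add: power2_eq_square algebra_simps)
        then have "R * A \<le> 32 * real tau" using Rpos P by (simp add: mult_le_cancel_right)
        then show ?thesis by (simp add: algebra_simps)
      qed
      have "real (tau div 2) * (1/2) \<le> real (tau div 2) * (1 - (\<Sum>q<tau div 2. p q))"
        using half_prefix by (intro mult_left_mono) auto
      also have "\<dots> \<le> mean_queue p" by (rule mean_ge)
      finally have m1: "real (tau div 2) / 2 \<le> mean_queue p" by simp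
      have "tau \<le> 2 * (tau div 2) + 1" by presburger
      then have "real tau \<le> 2 * real (tau div 2) + 1" by linarith
      then have "real (tau div 2) \<ge> (real tau - 1)/2" by (simp add: field_simps)
      then have "mean_queue p \<ge> A * R / 128 - 1/4" using m1 taub by linarith
      moreover have "A * R / 256 \<ge> 1/4" using RA A0 by (simp add: field_simps)
      ultimately have "mean_queue p \<ge> (A/256) * R" by linarith
      moreover have "c * R \<le> (A/256) * R" using Rpos by (simp add: c_def)
      ultimately show ?thesis using R_def L_def by simp
    qed
  qed
  have b2: "b/2 > 0" using b0 by simp
  show ?thesis using c0 b2 main by blast
qed

end
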